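(* Let $p\in[1,\infty)$, $a\in[0,1)$, and let $\phi:\mathbb{R}^d\to\mathbb{R}^d$ be a bi-Lipschitz homeomorphism preserving Lebesgue measure. Then there is a constant $C$ depending only on $d$, $p$ and $a$ such that for every locally integrable $f$ on $\mathbb{R}^d$, $$\|f\circ\phi\|^\sharp_{p,a}\le C\,\rho_a(K_\phi)\,\|f\|^\sharp_{p,a}.$$ In particular (case $a=0$), $\|f\circ\phi\|_{\mathrm{BMO}}\le C\log(K_\phi)\|f\|_{\mathrm{BMO}}$, and for $a\in(0,1)$, $\|f\circ\phi\|_{\mathrm{Lip}_p(a)}\le C K_\phi^a\|f\|_{\mathrm{Lip}_p(a)}$.
   Context: For a bi-Lipschitz homeomorphism $\phi$ of $\mathbb{R}^d$, $K_\phi:=\sup_{x\neq y}\left(\frac{|\phi(x)-\phi(y)|}{|x-y|}+\frac{|x-y|}{|\phi(x)-\phi(y)|}\right)$. "Preserving Lebesgue measure" means $|\phi(A)|=|A|$ for all measurable $A$. For $a\in[0,1]$, $\rho_a(r)=r^a$ if $a>0$ and $\rho_0(r)=\log r$. For $p\in[1,\infty)$, $a\in[0,1]$ and $f\in L^1_{loc}(\mathbb{R}^d)$, $$\|f\|^\sharp_{p,a}=\sup_B\left(\frac{1}{|B|^{1+ap/d}}\int_B\Big|f(y)-\frac{1}{|B|}\int_B f\Big|^p\,dy\right)^{1/p},$$ the supremum over all balls $B\subset\mathbb{R}^d$. $\mathrm{BMO}$ is the space of $f$ with $\|f\|^\sharp_{1,0}<\infty$ (by John–Nirenberg, $\|f\|^\sharp_{p,0}$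 are all equivalent norms, denoted $\|f\|_{\mathrm{BMO}}$), and $\mathrm{Lip}_p(a)$, $a\in(0,1]$, is the space of $f$ with $\|f\|^\sharp_{p,a}<\infty$, normed by $\|f\|^\sharp_{p,a}$. *)

theory Defs
  imports "HOL-Analysis.Analysis"
begin

definition enn_root :: "real \<Rightarrow> ennreal \<Rightarrow> ennreal" where
  "enn_root p x = (if x = \<infinity> then \<infinity> else ennreal (enn2real x powr (1 / p)))"

definition ball_avg :: "('a::euclidean_space \<Rightarrow> real) \<Rightarrow> 'a \<Rightarrow> real \<Rightarrow> real" where
  "ball_avg f x r = (LINT y:ball x r|lebesgue. f y) / measure lebesgue (ball x r)"

definition ball_osc :: "real \<Rightarrow> real \<Rightarrow> ('a::euclidean_space \<Rightarrow> real) \<Rightarrow> 'a \<Rightarrow> real \<Rightarrow> ennreal" where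
  "ball_osc p a f x r =
     enn_root p ((\<integral>\<^sup>+ y\<in>ball x r. ennreal (\<bar>f y - ball_avg f x r\<bar> powr p) \<partial>lebesgue)
                 / ennreal (measure lebesgue (ball x r) powr (1 + a * p / real DIM('a))))"

definition sharp_norm :: "real \<Rightarrow> real \<Rightarrow> ('a::euclidean_space \<Rightarrow> real) \<Rightarrow> ennreal" where
  "sharp_norm p a f = (SUP xr \<in> {(x, r). r > 0}. ball_osc p a f (fst xr) (snd xr))"

definition rho :: "real \<Rightarrow> real \<Rightarrow> real" where
  "rho a r = (if a > 0 then r powr a else ln r)"

definition K_const :: "('a::euclidean_space \<Rightarrow> 'a) \<Rightarrow> real" where
  "K_const \<phi> = Sup {dist (\<phi> x) (\<phi> y) / dist x y + dist x y / dist (\<phi> x) (\<phi> y) | x y. x \<noteq> y}"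

definition bi_lipschitz :: "('a::euclidean_space \<Rightarrow> 'a) \<Rightarrow> bool" where
  "bi_lipschitz \<phi> \<longleftrightarrow> (\<exists>L. \<forall>x y. dist (\<phi> x) (\<phi> y) \<le> L * dist x y \<and> dist x y \<le> L * dist (\<phi> x) (\<phi> y))"

definition preserves_lebesgue :: "('a::euclidean_space \<Rightarrow> 'a) \<Rightarrow> bool" where
  "preserves_lebesgue \<phi> \<longleftrightarrow> (\<forall>A \<in> sets lebesgue. \<phi> ` A \<in> sets lebesgue \<and> emeasure lebesgue (\<phi> ` A) = emeasure lebesgue A)"

definition locally_integrable :: "('a::euclidean_space \<Rightarrow> real) \<Rightarrow> bool" where
  "locally_integrable f \<longleftrightarrow> (\<forall>K. compact K \<longrightarrow> set_integrable lebesgue K f)"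

end

theory Submission
  imports Defs
begin

lemma tangent_powr:
  fixes t m p :: real
  assumes "t \<ge> 0" "m > 0" "p \<ge> 1"
  shows "m powr p + p * m powr (p-1) * (t - m) \<le> t powr p"
proof (cases "t = 0 \<or> p = 1")
  case True
  then show ?thesis
  proof
    assume "t = 0"
    then show ?thesis using assms by (simp add: powr_diff field_simps)
  next
    assume "p = 1" then show ?thesis using assms by simp
  qed
next
  case False
  then have t: "t > 0" and p: "p > 1" using assms by auto
  have "(t powr p) powr (1/p) * (m powr p) powr (1 - 1/p) \<le> (1/p) * t powr p + (1 - 1/p) * m powr p"
    by (rule Youngs_inequality_0) (use p t assms in auto)
  moreover have "(t powr p) powr (1/p) = t" using p t by (simp add: powr_powr)
  moreover have "(m powr p) powr (1 - 1/p) = m powr (p - 1)"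
    using p assms by (simp add: powr_powr algebra_simps)
  ultimately have "t * m powr (p-1) \<le> (1/p) * t powr p + (1 - 1/p) * m powr p" by simp
  then have "p * (t * m powr (p-1)) \<le> p * ((1/p) * t powr p + (1 - 1/p) * m powr p)"
    using p by simp
  also have "\<dots> = t powr p + (p - 1) * m powr p" using p by (simp add: algebra_simps)
  finally have *: "p * t * m powr (p-1) \<le> t powr p + (p - 1) * m powr p" by (simp add: mult.assoc)
  have "m powr p = m * m powr (p - 1)" using assms by (simp add: powr_diff field_simps)
  then show ?thesis using * by (simp add: algebra_simps)
qed

lemma sum_powr_le:
  fixes u v p :: real
  assumes "u \<ge> 0" "v \<ge> 0" "p \<ge> 1"
  shows "(u + v) powr p \<le> 2 powr p * (u powr p + v powr p)"
proof -
  have "(u + v) powr p \<le> (2 * max u v) powr p"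
    by (rule powr_mono2) (use assms in auto)
  also have "\<dots> = 2 powr p * max u v powr p" using assms by (simp add: powr_mult)
  also have "max u v powr p \<le> u powr p + v powr p"
    by (cases "u \<le> v") (auto simp: max_def)
  then have "2 powr p * max u v powr p \<le> 2 powr p * (u powr p + v powr p)" by simp
  finally show ?thesis .
qed

lemma enn_root_le_iff:
  fixes X :: ennreal and Q M p :: real
  assumes "Q > 0" "M \<ge> 0" "p \<ge> 1"
  shows "enn_root p (X / ennreal Q) \<le> ennreal M \<longleftrightarrow> X \<le> ennreal (M powr p * Q)"
proof (cases "X = \<infinity>")
  case True
  then show ?thesis using assms by (simp add: enn_root_def ennreal_divide_eq_top_iff top_unique)
next
  case False
  then obtain x where x: "X = ennreal x" "x \<ge> 0" by (cases X) auto
  have "X / ennreal Q = ennreal (x / Q)" using x assms by (simp add: divide_ennreal)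
  then have e: "enn_root p (X / ennreal Q) = ennreal ((x/Q) powr (1/p))"
    using x assms by (simp add: enn_root_def)
  have "(x/Q) powr (1/p) \<le> M \<longleftrightarrow> x / Q \<le> M powr p"
  proof
    assume h: "(x/Q) powr (1/p) \<le> M"
    have "x/Q = ((x/Q) powr (1/p)) powr p" using assms x by (simp add: powr_powr)
    also have "\<dots> \<le> M powr p" by (rule powr_mono2) (use assms h in auto)
    finally show "x / Q \<le> M powr p" .
  next
    assume h: "x / Q \<le> M powr p"
    have "(x/Q) powr (1/p) \<le> (M powr p) powr (1/p)" by (rule powr_mono2) (use assms h x in auto)
    also have "\<dots> = M" using assms by (simp add: powr_powr)
    finally show "(x/Q) powr (1/p) \<le> M" .
  qed
  also have "\<dots> \<longleftrightarrow> x \<le> M powr p * Q" using assms by (simp add: divide_le_eq)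
  finally show ?thesis using e x assms by (simp add: ennreal_le_iff)
qed


lemma set_integrable_const_real:
  assumes "A \<in> sets M" "emeasure M A < \<infinity>"
  shows "set_integrable M A (\<lambda>_. c::real)"
  unfolding set_integrable_def using assms
  by (simp add: integrable_real_indicator)

lemma nn_set_integral_as_real:
  fixes k :: "'b \<Rightarrow> real"
  assumes "set_integrable M A k" "\<And>y. y \<in> A \<Longrightarrow> k y \<ge> 0"
  shows "(\<integral>\<^sup>+ y\<in>A. ennreal (k y) \<partial>M) = ennreal (LINT y:A|M. k y)"
proof -
  have "(\<integral>\<^sup>+ y\<in>A. ennreal (k y) \<partial>M) = (\<integral>\<^sup>+ y. ennreal (indicator A y *\<^sub>R k y) \<partial>M)"
    by (intro nn_integral_cong) (auto split: split_indicator)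
  also have "\<dots> = ennreal (LINT y|M. indicator A y *\<^sub>R k y)"
    using assms unfolding set_integrable_def
    by (intro nn_integral_eq_integral) (auto split: split_indicator)
  finally show ?thesis by (simp add: set_lebesgue_integral_def)
qed

lemma jensen_set:
  fixes h :: "'b \<Rightarrow> real"
  assumes A: "A \<in> sets M" "emeasure M A < \<infinity>" "0 < measure M A"
   and hi: "set_integrable M A h" and p: "p \<ge> 1"
  shows "ennreal (\<bar>(LINT y:A|M. h y) / measure M A - c\<bar> powr p * measure M A)
           \<le> (\<integral>\<^sup>+ y\<in>A. ennreal (\<bar>h y - c\<bar> powr p) \<partial>M)"
proof (cases "(\<integral>\<^sup>+ y\<in>A. ennreal (\<bar>h y - c\<bar> powr p) \<partial>M) = \<infinity>")
  case True then show ?thesis by simp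
next
  case False
  define \<mu> where "\<mu> = measure M A"
  have \<mu>: "\<mu> > 0" using A by (simp add: \<mu>_def)
  have ci: "set_integrable M A (\<lambda>_. c)" by (rule set_integrable_const_real) (use A in auto)
  have hc: "set_integrable M A (\<lambda>y. h y - c)" using hi ci by auto
  have ahc: "set_integrable M A (\<lambda>y. \<bar>h y - c\<bar>)" using set_integrable_abs[OF hc] .
  have meas: "(\<lambda>y. indicator A y *\<^sub>R (\<bar>h y - c\<bar> powr p)) \<in> borel_measurable M"
  proof -
    have "(\<lambda>y. indicator A y *\<^sub>R (h y - c)) \<in> borel_measurable M"
      using hc unfolding set_integrable_def by auto
    then have "(\<lambda>y. \<bar>indicator A y *\<^sub>R (h y - c)\<bar> powr p) \<in> borel_measurable M" by measurable
    moreover have "(\<lambda>y. \<bar>indicator A y *\<^sub>R (h y - c)\<bar> powr p) = (\<lambda>y. indicator A y *\<^sub>R (\<bar>h y - c\<bar> powr p))"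
      using p by (auto simp: fun_eq_iff split: split_indicator)
    ultimately show ?thesis by simp
  qed
  have ki: "set_integrable M A (\<lambda>y. \<bar>h y - c\<bar> powr p)"
    unfolding set_integrable_def
  proof (rule integrableI_nonneg[OF meas])
    show "AE x in M. 0 \<le> indicator A x *\<^sub>R \<bar>h x - c\<bar> powr p" by (auto split: split_indicator)
    have "(\<integral>\<^sup>+ x. ennreal (indicator A x *\<^sub>R \<bar>h x - c\<bar> powr p) \<partial>M) = (\<integral>\<^sup>+ y\<in>A. ennreal (\<bar>h y - c\<bar> powr p) \<partial>M)"
      by (intro nn_integral_cong) (auto split: split_indicator)
    then show "(\<integral>\<^sup>+ x. ennreal (indicator A x *\<^sub>R \<bar>h x - c\<bar> powr p) \<partial>M) < \<infinity>"
      using False by (simp add: less_top)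
  qed
  have eq: "(\<integral>\<^sup>+ y\<in>A. ennreal (\<bar>h y - c\<bar> powr p) \<partial>M) = ennreal (LINT y:A|M. \<bar>h y - c\<bar> powr p)"
    by (rule nn_set_integral_as_real[OF ki]) auto
  define m where "m = (LINT y:A|M. \<bar>h y - c\<bar>) / \<mu>"
  have sc: "(LINT y:A|M. c) = \<mu> * c" using set_integral_const[OF A(1), of c] A(2) by (simp add: \<mu>_def less_top)
  have "(LINT y:A|M. h y) / \<mu> - c = (LINT y:A|M. h y - c) / \<mu>"
    using hi ci \<mu> sc by (simp add: field_simps)
  then have le_m: "\<bar>(LINT y:A|M. h y) / \<mu> - c\<bar> \<le> m"
    unfolding m_def using set_integral_norm_bound[OF hc] \<mu> by (simp add: abs_divide divide_right_mono)
  show ?thesis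
  proof (cases "m = 0")
    case True
    then have "\<bar>(LINT y:A|M. h y) / \<mu> - c\<bar> = 0" using le_m by linarith
    then show ?thesis using p by (simp add: \<mu>_def)
  next
    case False
    have "0 \<le> (LINT y:A|M. \<bar>h y - c\<bar>)" unfolding set_lebesgue_integral_def
      by (rule Bochner_Integration.integral_nonneg) (auto split: split_indicator)
    then have m0: "m \<ge> 0" unfolding m_def using \<mu> by simp
    with False have m: "m > 0" by linarith
    have tang: "set_integrable M A (\<lambda>y. m powr p + p * m powr (p-1) * (\<bar>h y - c\<bar> - m))"
      using ahc set_integrable_const_real[OF A(1,2)] by (intro set_integral_add set_integral_diff set_integrable_mult_right) auto
    have "(LINT y:A|M. m powr p + p * m powr (p-1) * (\<bar>h y - c\<bar> - m))
          = \<mu> * m powr p + p * m powr (p-1) * ((LINT y:A|M. \<bar>h y - c\<bar>) - \<mu> * m)"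
      using ahc set_integrable_const_real[OF A(1,2)] A
      by (simp add: set_integral_const \<mu>_def less_top[symmetric])
    also have "\<dots> = \<mu> * m powr p" using \<mu> by (simp add: m_def)
    finally have "\<mu> * m powr p \<le> (LINT y:A|M. \<bar>h y - c\<bar> powr p)"
      using set_integral_mono[OF tang ki tangent_powr[OF _ m p]] by simp
    moreover have "\<bar>(LINT y:A|M. h y) / \<mu> - c\<bar> powr p \<le> m powr p"
      by (rule powr_mono2) (use p le_m in auto)
    ultimately have "\<bar>(LINT y:A|M. h y) / \<mu> - c\<bar> powr p * \<mu> \<le> (LINT y:A|M. \<bar>h y - c\<bar> powr p)"
      using \<mu> by (smt (verit) mult.commute mult_right_mono)
    then show ?thesis unfolding eq \<mu>_def by (simp add: ennreal_leI)
  qed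
qed


locale bl_map =
  fixes \<phi> \<psi> :: "'a::euclidean_space \<Rightarrow> 'a" and K :: real
  assumes hom: "homeomorphism UNIV UNIV \<phi> \<psi>"
    and lipK: "\<And>x y. dist (\<phi> x) (\<phi> y) \<le> K * dist x y"
    and colipK: "\<And>x y. dist x y \<le> K * dist (\<phi> x) (\<phi> y)"
    and K2: "K \<ge> 2"
    and pres: "preserves_lebesgue \<phi>"
begin

lemma phi_psi[simp]: "\<phi> (\<psi> y) = y" using homeomorphism_apply2[OF hom] by simp
lemma psi_phi[simp]: "\<psi> (\<phi> x) = x" using homeomorphism_apply1[OF hom] by simp

lemma psi_lip: "dist (\<psi> u) (\<psi> v) \<le> K * dist u v"
  using colipK[of "\<psi> u" "\<psi> v"] by simp

lemma vimage_phi: "\<phi> -` A = \<psi> ` A"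
proof
  show "\<phi> -` A \<subseteq> \<psi> ` A"
  proof
    fix x assume "x \<in> \<phi> -` A"
    then have "\<phi> x \<in> A" by simp
    moreover have "x = \<psi> (\<phi> x)" by simp
    ultimately show "x \<in> \<psi> ` A" by blast
  qed
  show "\<psi> ` A \<subseteq> \<phi> -` A" by auto
qed

lemma image_phi_sets: "B \<in> sets lebesgue \<Longrightarrow> \<phi> ` B \<in> sets lebesgue"
  using pres unfolding preserves_lebesgue_def by auto

lemma emeasure_image_phi: "B \<in> sets lebesgue \<Longrightarrow> emeasure lebesgue (\<phi> ` B) = emeasure lebesgue B"
  using pres unfolding preserves_lebesgue_def by auto

lemma psi_image_sets: assumes "A \<in> sets lebesgue" shows "\<psi> ` A \<in> sets lebesgue"
proof (rule sets_lebesgue_continuous_image[OF assms])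
  show "continuous_on UNIV \<psi>" using hom by (simp add: homeomorphism_def)
  show "negligible (\<psi> ` T)" if "negligible T" "T \<subseteq> UNIV" for T
  proof (rule negligible_locally_Lipschitz_image[OF _ that(1)])
    show "\<exists>U B. open U \<and> x \<in> U \<and> (\<forall>y\<in>T \<inter> U. norm (\<psi> y - \<psi> x) \<le> B * norm (y - x))" for x
      using psi_lip by (intro exI[of _ UNIV] exI[of _ K]) (auto simp: dist_norm)
  qed auto
qed auto

lemma meas_phi: "\<phi> \<in> measurable lebesgue lebesgue"
proof (rule measurableI)
  fix A :: "'a set" assume "A \<in> sets lebesgue"
  then show "\<phi> -` A \<inter> space lebesgue \<in> sets lebesgue"
    using psi_image_sets by (simp add: vimage_phi)
qed auto

lemma distr_phi: "distr lebesgue lebesgue \<phi> = lebesgue"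
proof (rule measure_eqI)
  fix A :: "'a set" assume A: "A \<in> sets (distr lebesgue lebesgue \<phi>)"
  then have A': "A \<in> sets lebesgue" by simp
  have "emeasure (distr lebesgue lebesgue \<phi>) A = emeasure lebesgue (\<psi> ` A)"
    using A' meas_phi by (simp add: emeasure_distr vimage_phi)
  also have "\<dots> = emeasure lebesgue (\<phi> ` \<psi> ` A)"
    using emeasure_image_phi[OF psi_image_sets[OF A']] by simp
  also have "\<phi> ` \<psi> ` A = A" by (force simp: image_iff)
  finally show "emeasure (distr lebesgue lebesgue \<phi>) A = emeasure lebesgue A" .
qed simp

lemma nn_change:
  assumes g: "g \<in> borel_measurable lebesgue" and B: "B \<in> sets lebesgue"
  shows "(\<integral>\<^sup>+ x\<in>B. g (\<phi> x) \<partial>lebesgue) = (\<integral>\<^sup>+ y\<in>\<phi> ` B. g y \<partial>lebesgue)"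
proof -
  have m: "(\<lambda>y. g y * indicator (\<phi> ` B) y) \<in> borel_measurable lebesgue"
    using g image_phi_sets[OF B] by measurable
  have "(\<integral>\<^sup>+ y\<in>\<phi> ` B. g y \<partial>lebesgue) = (\<integral>\<^sup>+ y. g y * indicator (\<phi> ` B) y \<partial>distr lebesgue lebesgue \<phi>)"
    by (simp add: distr_phi)
  also have "\<dots> = (\<integral>\<^sup>+ x. g (\<phi> x) * indicator (\<phi> ` B) (\<phi> x) \<partial>lebesgue)"
    by (rule nn_integral_distr[OF meas_phi]) (use m in simp)
  also have "\<dots> = (\<integral>\<^sup>+ x\<in>B. g (\<phi> x) \<partial>lebesgue)"
    by (intro nn_integral_cong) (auto simp: indicator_def image_iff, metis psi_phi)
  finally show ?thesis by simp
qed

lemma image_ball_sub: "\<phi> ` ball x r \<subseteq> ball (\<phi> x) (K * r)"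
proof
  fix z assume "z \<in> \<phi> ` ball x r"
  then obtain y where y: "z = \<phi> y" "dist x y < r" by auto
  have "dist (\<phi> x) (\<phi> y) \<le> K * dist x y" by (rule lipK)
  also have "\<dots> < K * r" using y K2 by simp
  finally show "z \<in> ball (\<phi> x) (K * r)" using y by simp
qed

lemma ball_sub_image:
  assumes w: "w \<in> \<phi> ` ball x0 r"
  shows "ball w (r / K) \<subseteq> \<phi> ` ball x0 (2 * r)"
proof
  fix z assume z: "z \<in> ball w (r / K)"
  obtain x where x: "w = \<phi> x" "dist x0 x < r" using w by auto
  have "dist x (\<psi> z) = dist (\<psi> w) (\<psi> z)" using x by simp
  also have "\<dots> \<le> K * dist w z" by (rule psi_lip)
  also have "\<dots> < K * (r / K)" using z K2 by (intro mult_strict_left_mono) auto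
  also have "\<dots> = r" using K2 by simp
  finally have "dist x0 (\<psi> z) < 2 * r" using x dist_triangle[of x0 "\<psi> z" x] by linarith
  then show "z \<in> \<phi> ` ball x0 (2 * r)" by (force simp: image_iff intro: exI[of _ "\<psi> z"])
qed

end


definition ubv :: "'a::euclidean_space itself \<Rightarrow> real" where
  "ubv _ = unit_ball_vol (real DIM('a))"

lemma emeasure_ball_leb:
  fixes c :: "'a::euclidean_space"
  assumes "r \<ge> 0"
  shows "emeasure lebesgue (ball c r) = ennreal (unit_ball_vol DIM('a) * r ^ DIM('a))"
  using emeasure_ball[of r c] assms by (simp add: emeasure_completion)

lemma measure_ball_leb:
  fixes c :: "'a::euclidean_space"
  assumes "r \<ge> 0"
  shows "measure lebesgue (ball c r) = unit_ball_vol DIM('a) * r ^ DIM('a)"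
  using emeasure_ball_leb[OF assms, of c] assms unfolding measure_def by simp


lemma root_le_from_pow:
  fixes t y p :: real
  assumes "t \<ge> 0" "y \<ge> 0" "p > 0" "t powr p \<le> y powr p"
  shows "t \<le> y"
  using assms by (meson not_le powr_less_mono2)

lemma avg_step:
  fixes f :: "'a::euclidean_space \<Rightarrow> real"
  assumes p: "p \<ge> 1" "0 \<le> a" and M: "M \<ge> 0"
   and fi: "set_integrable lebesgue (ball x1 r1) f"
   and bd: "(\<integral>\<^sup>+ y\<in>ball x2 r2. ennreal (\<bar>f y - ball_avg f x2 r2\<bar> powr p) \<partial>lebesgue)
              \<le> ennreal (M powr p * measure lebesgue (ball x2 r2) powr (1 + a*p/DIM('a)))"
   and sub: "ball x1 r1 \<subseteq> ball x2 r2" and r: "0 < r1" "r2 \<le> 2*r1"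
  shows "\<bar>ball_avg f x1 r1 - ball_avg f x2 r2\<bar>
           \<le> 2 powr (DIM('a)/p) * M * measure lebesgue (ball x2 r2) powr (a/DIM('a))"
proof -
  define d where "d = real DIM('a)"
  define \<omega> where "\<omega> = unit_ball_vol DIM('a)"
  have d: "d \<ge> 1" unfolding d_def by simp
  have \<omega>: "\<omega> > 0" unfolding \<omega>_def by simp
  define V1 where "V1 = measure lebesgue (ball x1 r1)"
  define V2 where "V2 = measure lebesgue (ball x2 r2)"
  have "x1 \<in> ball x2 r2" using sub r centre_in_ball[of x1 r1] by blast
  then have r2: "r2 > 0" by (meson dist_not_less_zero mem_ball order_le_less_trans not_le)
  have V1: "V1 = \<omega> * r1 ^ DIM('a)" unfolding V1_def \<omega>_def by (rule measure_ball_leb) (use r in auto)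
  have V2: "V2 = \<omega> * r2 ^ DIM('a)" unfolding V2_def \<omega>_def by (rule measure_ball_leb) (use r2 in auto)
  have V1p: "V1 > 0" using V1 \<omega> r by simp
  have V2p: "V2 > 0" using V2 \<omega> r2 by simp
  have "r2 ^ DIM('a) \<le> (2*r1) ^ DIM('a)" using r2 r by (intro power_mono) auto
  then have V21: "V2 \<le> 2 powr d * V1" unfolding V1 V2 d_def using \<omega>
    by (simp add: powr_realpow power_mult_distrib)
  define t where "t = \<bar>ball_avg f x1 r1 - ball_avg f x2 r2\<bar>"
  have "ennreal (t powr p * V1) \<le> (\<integral>\<^sup>+ y\<in>ball x1 r1. ennreal (\<bar>f y - ball_avg f x2 r2\<bar> powr p) \<partial>lebesgue)"
    unfolding t_def V1_def ball_avg_def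
  proof (rule jensen_set)
    show "emeasure lebesgue (ball x1 r1) < \<infinity>"
      unfolding emeasure_ball_leb[of r1 x1, OF less_imp_le[OF r(1)]] by simp
    show "0 < measure lebesgue (ball x1 r1)" using V1p V1_def by simp
    show "ball x1 r1 \<in> sets lebesgue" by simp
    show "set_integrable lebesgue (ball x1 r1) f" by (rule fi)
    show "1 \<le> p" by (rule p(1))
  qed
  also have "\<dots> \<le> (\<integral>\<^sup>+ y\<in>ball x2 r2. ennreal (\<bar>f y - ball_avg f x2 r2\<bar> powr p) \<partial>lebesgue)"
    using sub by (intro nn_integral_mono) (auto split: split_indicator)
  also have "\<dots> \<le> ennreal (M powr p * V2 powr (1 + a*p/d))" using bd unfolding V2_def d_def .
  finally have "t powr p * V1 \<le> M powr p * V2 powr (1 + a*p/d)"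
    by (subst (asm) ennreal_le_iff) (use M V2p in auto)
  also have "\<dots> = M powr p * V2 powr (a*p/d) * V2" using V2p by (simp add: powr_add)
  also have "\<dots> \<le> M powr p * V2 powr (a*p/d) * (2 powr d * V1)"
    using V21 by (intro mult_left_mono) auto
  finally have "t powr p \<le> M powr p * V2 powr (a*p/d) * 2 powr d"
    using V1p by (simp add: mult.assoc mult.left_commute[of V1])
  also have "\<dots> = (2 powr (d/p) * M * V2 powr (a/d)) powr p"
  proof -
    have "(2 powr (d/p) * M * V2 powr (a/d)) powr p = (2 powr (d/p)) powr p * M powr p * (V2 powr (a/d)) powr p"
      using M by (simp add: powr_mult)
    also have "\<dots> = 2 powr d * M powr p * V2 powr (a*p/d)"
      using p by (simp add: powr_powr)
    finally show ?thesis by simp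
  qed
  finally have "t powr p \<le> (2 powr (d/p) * M * V2 powr (a/d)) powr p" .
  then have "t \<le> 2 powr (d/p) * M * V2 powr (a/d)"
    by (rule root_le_from_pow[rotated 3]) (use p M t_def in auto)
  then show ?thesis unfolding t_def V2_def d_def .
qed


context bl_map begin

lemma sep_card_bound:
  assumes r: "r > 0" and W: "finite W" "W \<subseteq> \<phi> ` ball x0 r"
    and sep: "\<And>u v. u \<in> W \<Longrightarrow> v \<in> W \<Longrightarrow> u \<noteq> v \<Longrightarrow> dist u v \<ge> r / K"
  shows "real (card W) \<le> (4 * K) ^ DIM('a)"
proof -
  define s where "s = r / K"
  have K0: "K > 0" using K2 by simp
  have s: "s > 0" using r K0 by (simp add: s_def)
  define \<omega> where "\<omega> = unit_ball_vol (real DIM('a))"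
  have \<omega>: "\<omega> > 0" unfolding \<omega>_def by simp
  have disj: "disjoint_family_on (\<lambda>w. ball w (s/2)) W"
    unfolding disjoint_family_on_def
  proof (intro ballI impI)
    fix u v assume uv: "u \<in> W" "v \<in> W" "u \<noteq> v"
    have "dist u v \<ge> s" using sep[OF uv] by (simp add: s_def)
    then show "ball u (s/2) \<inter> ball v (s/2) = {}"
      by (auto simp: mem_ball) (smt (verit) dist_commute dist_triangle)
  qed
  have "(\<Sum>w\<in>W. emeasure lebesgue (ball w (s/2))) = emeasure lebesgue (\<Union>w\<in>W. ball w (s/2))"
    by (rule sum_emeasure) (use disj W in auto)
  also have "\<dots> \<le> emeasure lebesgue (\<phi> ` ball x0 (2*r))"
  proof (rule emeasure_mono)
    show "(\<Union>w\<in>W. ball w (s/2)) \<subseteq> \<phi> ` ball x0 (2*r)"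
    proof (rule UN_least)
      fix w assume "w \<in> W"
      then have "ball w (r/K) \<subseteq> \<phi> ` ball x0 (2*r)" using W ball_sub_image by blast
      moreover have "ball w (s/2) \<subseteq> ball w (r/K)" using s by (auto simp: s_def)
      ultimately show "ball w (s/2) \<subseteq> \<phi> ` ball x0 (2*r)" by blast
    qed
    show "\<phi> ` ball x0 (2*r) \<in> sets lebesgue" by (rule image_phi_sets) simp
  qed
  also have "\<dots> = emeasure lebesgue (ball x0 (2*r))" by (rule emeasure_image_phi) simp
  finally have X: "(\<Sum>w\<in>W. emeasure lebesgue (ball w (s/2))) \<le> emeasure lebesgue (ball x0 (2*r))" .
  have e1: "\<And>w::'a. emeasure lebesgue (ball w (s/2)) = ennreal (\<omega> * (s/2) ^ DIM('a))"
    unfolding \<omega>_def by (rule emeasure_ball_leb) (use s in auto)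
  have e2: "emeasure lebesgue (ball x0 (2*r)) = ennreal (\<omega> * (2*r) ^ DIM('a))"
    unfolding \<omega>_def by (rule emeasure_ball_leb) (use r in auto)
  have "(\<Sum>w\<in>W. ennreal (\<omega> * (s/2) ^ DIM('a))) \<le> ennreal (\<omega> * (2*r) ^ DIM('a))"
    using X by (simp only: e1 e2)
  also have "(\<Sum>w\<in>W. ennreal (\<omega> * (s/2) ^ DIM('a))) = ennreal (\<Sum>w\<in>W. \<omega> * (s/2) ^ DIM('a))"
    by (rule sum_ennreal) (use \<omega> s in auto)
  finally have "ennreal (real (card W) * (\<omega> * (s/2) ^ DIM('a))) \<le> ennreal (\<omega> * (2*r) ^ DIM('a))"
    by simp
  then have "real (card W) * (\<omega> * (s/2) ^ DIM('a)) \<le> \<omega> * (2*r) ^ DIM('a)"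
    using \<omega> r by (simp add: ennreal_le_iff)
  then have "real (card W) * (s/2) ^ DIM('a) \<le> (2*r) ^ DIM('a)"
    using \<omega> by (simp add: algebra_simps)
  moreover have "4*K*(s/2) = 2*r" using K0 by (simp add: s_def)
  then have "(2*r) ^ DIM('a) = (4 * K) ^ DIM('a) * (s/2) ^ DIM('a)"
    by (metis power_mult_distrib)
  ultimately have "real (card W) * (s/2) ^ DIM('a) \<le> (4 * K) ^ DIM('a) * (s/2) ^ DIM('a)" by simp
  moreover have "(s/2) ^ DIM('a) > 0" using s by simp
  ultimately show ?thesis by (meson mult_right_le_imp_le)
qed

lemma covering:
  assumes r: "r > 0"
  obtains W where "finite W" "W \<subseteq> \<phi> ` ball x0 r" "\<phi> ` ball x0 r \<subseteq> (\<Union>w\<in>W. ball w (r/K))"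
    "real (card W) \<le> (4*K) ^ DIM('a)"
proof -
  define P where "P = (\<lambda>W. finite W \<and> W \<subseteq> \<phi> ` ball x0 r \<and>
      (\<forall>u\<in>W. \<forall>v\<in>W. u \<noteq> v \<longrightarrow> dist u v \<ge> r / K))"
  have bd: "card W < nat \<lceil>(4*K) ^ DIM('a)\<rceil> + 1" if "P W" for W
  proof -
    have "real (card W) \<le> (4 * K) ^ DIM('a)"
      using that unfolding P_def by (intro sep_card_bound[OF r]) auto
    then show ?thesis by linarith
  qed
  have "P {}" unfolding P_def by simp
  then obtain W where W: "P W" and mx: "\<And>W'. P W' \<Longrightarrow> card W' \<le> card W"
    using ex_has_greatest_nat[of P "{}" card] bd by blast
  have cov: "\<phi> ` ball x0 r \<subseteq> (\<Union>w\<in>W. ball w (r/K))"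
  proof
    fix y assume y: "y \<in> \<phi> ` ball x0 r"
    show "y \<in> (\<Union>w\<in>W. ball w (r/K))"
    proof (rule ccontr)
      assume "y \<notin> (\<Union>w\<in>W. ball w (r/K))"
      then have far: "\<forall>w\<in>W. dist w y \<ge> r / K" by (auto simp: not_less)
      have "y \<notin> W" using far r K2 by (auto, metis dist_self divide_pos_pos not_le order_less_le_trans zero_less_numeral dual_order.strict_trans1)
      have "P (insert y W)" using W far y unfolding P_def by (auto simp: dist_commute)
      then have "card (insert y W) \<le> card W" by (rule mx)
      moreover have "card (insert y W) = card W + 1" using W \<open>y \<notin> W\<close> unfolding P_def by simp
      ultimately show False by simp
    qed
  qed
  show ?thesis
    by (rule that[of W]) (use W cov sep_card_bound[OF r, of W x0] in \<open>auto simp: P_def\<close>)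
qed

end


lemma li_ball_integrable:
  assumes "locally_integrable f"
  shows "set_integrable lebesgue (ball x r) f"
proof -
  have "set_integrable lebesgue (cball x r) f" using assms by (simp add: locally_integrable_def)
  then show ?thesis by (rule set_integrable_subset) auto
qed

lemma li_measurable:
  fixes f :: "'a::euclidean_space \<Rightarrow> real"
  assumes "locally_integrable f"
  shows "f \<in> borel_measurable lebesgue"
proof (rule borel_measurable_LIMSEQ_real)
  fix i :: nat
  show "(\<lambda>x. indicator (ball 0 (real i)) x *\<^sub>R f x) \<in> borel_measurable lebesgue"
    using li_ball_integrable[OF assms, of 0 "real i"] unfolding set_integrable_def by auto
next
  fix x :: 'a
  obtain N :: nat where N: "norm x < real N" using reals_Archimedean2 by blast
  have "\<forall>\<^sub>F i in sequentially. indicator (ball 0 (real i)) x *\<^sub>R f x = f x"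
    unfolding eventually_sequentially
  proof (intro exI allI impI)
    fix i assume "N \<le> i"
    then have "norm x < real i" using N by linarith
    then show "indicator (ball 0 (real i)) x *\<^sub>R f x = f x" by (simp add: dist_norm)
  qed
  then show "(\<lambda>i. indicator (ball 0 (real i)) x *\<^sub>R f x) \<longlonglongrightarrow> f x"
    by (rule tendsto_eventually)
qed

lemma measure_ball_powr:
  fixes x :: "'a::euclidean_space"
  assumes "r > 0"
  shows "measure lebesgue (ball x r) powr (a / DIM('a)) = unit_ball_vol DIM('a) powr (a / DIM('a)) * r powr a"
proof -
  have "measure lebesgue (ball x r) = unit_ball_vol DIM('a) * r ^ DIM('a)"
    by (rule measure_ball_leb) (use assms in auto)
  then have "measure lebesgue (ball x r) powr (a / DIM('a)) = unit_ball_vol DIM('a) powr (a / DIM('a)) * (r ^ DIM('a)) powr (a / DIM('a))"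
    using assms by (simp add: powr_mult)
  also have "(r ^ DIM('a)) powr (a / DIM('a)) = r powr a"
    using assms by (simp add: powr_realpow[symmetric] powr_powr)
  finally show ?thesis .
qed

lemma osc_S1:
  fixes h :: "'a::euclidean_space \<Rightarrow> real"
  assumes p: "p \<ge> 1" and hm: "h \<in> borel_measurable lebesgue"
    and hi: "set_integrable lebesgue (ball x r) h" and r: "r > 0"
  shows "(\<integral>\<^sup>+ y\<in>ball x r. ennreal (\<bar>h y - ball_avg h x r\<bar> powr p) \<partial>lebesgue)
          \<le> ennreal (2 powr p * 2) * (\<integral>\<^sup>+ y\<in>ball x r. ennreal (\<bar>h y - c\<bar> powr p) \<partial>lebesgue)"
proof -
  define B where "B = ball x r"
  define m where "m = ball_avg h x r"
  define V where "V = measure lebesgue B"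
  have V: "V > 0" unfolding V_def B_def using measure_ball_leb[of r x] r by simp
  have Vfin: "emeasure lebesgue B < \<infinity>" unfolding B_def using emeasure_ball_leb[of r x] r by simp
  define I where "I = (\<integral>\<^sup>+ y\<in>B. ennreal (\<bar>h y - c\<bar> powr p) \<partial>lebesgue)"
  have J: "ennreal (\<bar>m - c\<bar> powr p * V) \<le> I"
    unfolding I_def m_def V_def ball_avg_def B_def
  proof (rule jensen_set)
    show "emeasure lebesgue (ball x r) < \<infinity>" using Vfin B_def by simp
    show "0 < measure lebesgue (ball x r)" using V V_def B_def by simp
  qed (use hi p in auto)
  have "(\<integral>\<^sup>+ y\<in>B. ennreal (\<bar>h y - m\<bar> powr p) \<partial>lebesgue)
        \<le> (\<integral>\<^sup>+ y. (ennreal (2 powr p) * ennreal (\<bar>h y - c\<bar> powr p) * indicator B y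
               + ennreal (2 powr p * \<bar>c - m\<bar> powr p) * indicator B y) \<partial>lebesgue)"
  proof (rule nn_integral_mono)
    fix y
    have "\<bar>h y - m\<bar> powr p \<le> (\<bar>h y - c\<bar> + \<bar>c - m\<bar>) powr p"
      by (rule powr_mono2) (use p in auto)
    also have "\<dots> \<le> 2 powr p * (\<bar>h y - c\<bar> powr p + \<bar>c - m\<bar> powr p)"
      by (rule sum_powr_le) (use p in auto)
    finally have "ennreal (\<bar>h y - m\<bar> powr p) \<le> ennreal (2 powr p) * ennreal (\<bar>h y - c\<bar> powr p) + ennreal (2 powr p * \<bar>c - m\<bar> powr p)"
      by (simp add: ennreal_mult'[symmetric] ennreal_plus[symmetric] distrib_left del: ennreal_plus)
    then show "ennreal (\<bar>h y - m\<bar> powr p) * indicator B y \<le> ennreal (2 powr p) * ennreal (\<bar>h y - c\<bar> powr p) * indicator B y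
               + ennreal (2 powr p * \<bar>c - m\<bar> powr p) * indicator B y"
      by (auto split: split_indicator)
  qed
  also have "\<dots> = ennreal (2 powr p) * I + ennreal (2 powr p * \<bar>c - m\<bar> powr p) * emeasure lebesgue B"
  proof -
    have [measurable]: "h \<in> borel_measurable lebesgue" by (rule hm)
    have [measurable]: "B \<in> sets lebesgue" unfolding B_def by simp
    have "(\<integral>\<^sup>+ y. (ennreal (2 powr p) * ennreal (\<bar>h y - c\<bar> powr p) * indicator B y
               + ennreal (2 powr p * \<bar>c - m\<bar> powr p) * indicator B y) \<partial>lebesgue)
       = (\<integral>\<^sup>+ y. ennreal (2 powr p) * (ennreal (\<bar>h y - c\<bar> powr p) * indicator B y) \<partial>lebesgue)
         + (\<integral>\<^sup>+ y. ennreal (2 powr p * \<bar>c - m\<bar> powr p) * indicator B y \<partial>lebesgue)"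
      by (subst nn_integral_add[symmetric]) (measurable, simp add: mult.assoc)
    also have "(\<integral>\<^sup>+ y. ennreal (2 powr p) * (ennreal (\<bar>h y - c\<bar> powr p) * indicator B y) \<partial>lebesgue)
        = ennreal (2 powr p) * I"
      unfolding I_def by (rule nn_integral_cmult) measurable
    also have "(\<integral>\<^sup>+ y. ennreal (2 powr p * \<bar>c - m\<bar> powr p) * indicator B y \<partial>lebesgue)
        = ennreal (2 powr p * \<bar>c - m\<bar> powr p) * emeasure lebesgue B"
      by (rule nn_integral_cmult_indicator) simp
    finally show ?thesis .
  qed
  also have "emeasure lebesgue B = ennreal V" unfolding V_def using Vfin by (simp add: emeasure_eq_ennreal_measure)
  also have "ennreal (2 powr p * \<bar>c - m\<bar> powr p) * ennreal V = ennreal (2 powr p) * ennreal (\<bar>m - c\<bar> powr p * V)"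
    using V by (simp add: ennreal_mult'[symmetric] abs_minus_commute mult.assoc)
  also have "ennreal (2 powr p) * I + ennreal (2 powr p) * ennreal (\<bar>m - c\<bar> powr p * V) \<le> ennreal (2 powr p) * I + ennreal (2 powr p) * I"
    using J by (intro add_left_mono mult_left_mono) auto
  also have "\<dots> = ennreal (2 powr p * 2) * I"
  proof -
    have "ennreal (2 powr p * 2) = ennreal (2 powr p) * 2" by (simp add: ennreal_mult')
    moreover have "ennreal (2 powr p) * I + ennreal (2 powr p) * I = ennreal (2 powr p) * 2 * I"
      by (metis mult_2 distrib_left mult.assoc)
    ultimately show ?thesis by simp
  qed
  finally show ?thesis unfolding I_def B_def m_def .
qed


definition Econst :: "'a::euclidean_space itself \<Rightarrow> real \<Rightarrow> real \<Rightarrow> real \<Rightarrow> real" where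
  "Econst _ p a M = 2 powr (DIM('a)/p) * M * unit_ball_vol DIM('a) powr (a / DIM('a))"

lemma chain_up:
  fixes f :: "'a::euclidean_space \<Rightarrow> real"
  assumes p: "p \<ge> 1" "0 \<le> a" and M: "M \<ge> 0"
   and fi: "\<And>x r. set_integrable lebesgue (ball x r) f"
   and bd: "\<And>x r. r > 0 \<Longrightarrow> (\<integral>\<^sup>+ y\<in>ball x r. ennreal (\<bar>f y - ball_avg f x r\<bar> powr p) \<partial>lebesgue)
              \<le> ennreal (M powr p * measure lebesgue (ball x r) powr (1 + a*p/DIM('a)))"
   and s: "s > 0"
  shows "\<bar>ball_avg f w s - ball_avg f w (2^n * s)\<bar> \<le> (\<Sum>j\<in>{1..n}. Econst TYPE('a) p a M * (2^j * s) powr a)"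
proof (induction n)
  case 0 then show ?case by simp
next
  case (Suc n)
  have "\<bar>ball_avg f w (2^n * s) - ball_avg f w (2^Suc n * s)\<bar>
      \<le> 2 powr (DIM('a)/p) * M * measure lebesgue (ball w (2^Suc n * s)) powr (a/DIM('a))"
  proof (rule avg_step[OF p M fi bd])
    show "ball w (2^n * s) \<subseteq> ball w (2^Suc n * s)" using s by (intro subset_ball) simp
  qed (use s in auto)
  also have "\<dots> = Econst TYPE('a) p a M * (2^Suc n * s) powr a"
  proof -
    have mb: "measure lebesgue (ball w (2^Suc n * s)) powr (a/DIM('a)) = unit_ball_vol DIM('a) powr (a / DIM('a)) * (2^Suc n * s) powr a"
      by (rule measure_ball_powr) (use s in simp)
    show ?thesis unfolding Econst_def mb by (simp only: mult.assoc)
  qed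
  finally have "\<bar>ball_avg f w s - ball_avg f w (2^Suc n * s)\<bar>
     \<le> (\<Sum>j\<in>{1..n}. Econst TYPE('a) p a M * (2^j * s) powr a) + Econst TYPE('a) p a M * (2^Suc n * s) powr a"
    using Suc.IH by linarith
  also have "\<dots> = (\<Sum>j\<in>{1..Suc n}. Econst TYPE('a) p a M * (2^j * s) powr a)"
    by simp
  finally show ?case .
qed

lemma chain:
  fixes f :: "'a::euclidean_space \<Rightarrow> real"
  assumes p: "p \<ge> 1" "0 \<le> a" and M: "M \<ge> 0"
   and fi: "\<And>x r. set_integrable lebesgue (ball x r) f"
   and bd: "\<And>x r. r > 0 \<Longrightarrow> (\<integral>\<^sup>+ y\<in>ball x r. ennreal (\<bar>f y - ball_avg f x r\<bar> powr p) \<partial>lebesgue)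
              \<le> ennreal (M powr p * measure lebesgue (ball x r) powr (1 + a*p/DIM('a)))"
   and s: "s > 0" and wz: "dist w z \<le> 2^n * s"
  shows "\<bar>ball_avg f w s - ball_avg f z (2^(n+1) * s)\<bar> \<le> (\<Sum>j\<in>{1..n+1}. Econst TYPE('a) p a M * (2^j * s) powr a)"
proof -
  have "\<bar>ball_avg f w (2^n * s) - ball_avg f z (2^(n+1) * s)\<bar>
      \<le> 2 powr (DIM('a)/p) * M * measure lebesgue (ball z (2^(n+1) * s)) powr (a/DIM('a))"
  proof (rule avg_step[OF p M fi bd])
    show "ball w (2^n * s) \<subseteq> ball z (2^(n+1) * s)"
    proof
      fix y assume "y \<in> ball w (2^n * s)"
      then have "dist w y < 2^n * s" by simp
      moreover have "dist z y \<le> dist z w + dist w y" by (rule dist_triangle)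
      moreover have "dist z w = dist w z" by (rule dist_commute)
      ultimately have "dist z y < 2^n * s + 2^n * s" using wz by linarith
      then show "y \<in> ball z (2^(n+1) * s)" by (simp add: algebra_simps)
    qed
  qed (use s in auto)
  also have "\<dots> = Econst TYPE('a) p a M * (2^(n+1) * s) powr a"
  proof -
    have mb: "measure lebesgue (ball z (2^(n+1) * s)) powr (a/DIM('a)) = unit_ball_vol DIM('a) powr (a / DIM('a)) * (2^(n+1) * s) powr a"
      by (rule measure_ball_powr) (use s in simp)
    show ?thesis unfolding Econst_def mb by (simp only: mult.assoc)
  qed
  finally show ?thesis
    using chain_up[OF p M fi bd s, of w n] by simp
qed


definition C1 :: "real \<Rightarrow> real" where
  "C1 a = (if a > 0 then 8 powr a / (2 powr a - 1) else 4 / ln 2)"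

lemma C1_pos: "a \<ge> 0 \<Longrightarrow> C1 a > 0"
  unfolding C1_def by auto

lemma chain_sum_bound:
  fixes K r a :: real
  assumes a: "0 \<le> a" and K: "K \<ge> 2" and r: "r > 0"
  obtains n :: nat where "K^2 \<le> 2^n"
    "(\<Sum>j\<in>{1..n+1}. (2^j * (r/K)) powr a) \<le> C1 a * rho a K * r powr a"
proof -
  define L where "L = log 2 (K^2)"
  have K0: "K > 0" using K by simp
  have "(2::real)^2 \<le> K^2" by (rule power_mono) (use K in auto)
  then have "K^2 \<ge> 4" by simp
  then have L2: "L \<ge> 2" unfolding L_def using K0 by (subst le_log_iff) auto
  define n where "n = nat \<lceil>L\<rceil>"
  have nL: "real n \<ge> L" "real n < L + 1" unfolding n_def using L2 by linarith+
  have "K^2 = 2 powr L" unfolding L_def using K0 by simp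
  also have "\<dots> \<le> 2 powr real n" using nL by simp
  finally have n1: "K^2 \<le> 2^n" by (simp add: powr_realpow)
  have "(2::real)^n = 2 powr real n" by (simp add: powr_realpow)
  also have "\<dots> < 2 powr (L + 1)" using nL by simp
  also have "\<dots> = 2 * K^2" unfolding L_def using K0 by (simp add: powr_add)
  finally have n2: "(2::real)^n < 2 * K^2" .
  have lnK: "ln K \<ge> ln 2" using K by simp
  have ln2: "ln (2::real) > 0" by simp
  show ?thesis
  proof (rule that[OF n1])
    show "(\<Sum>j\<in>{1..n+1}. (2^j * (r/K)) powr a) \<le> C1 a * rho a K * r powr a"
    proof (cases "a = 0")
      case True
      have "(\<Sum>j\<in>{1..n+1}. (2^j * (r/K)) powr a) = real (n+1)" using True r K0 by simp
      also have "real (n+1) \<le> L + 2" using nL by simp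
      also have "L = 2 * ln K / ln 2" unfolding L_def using K0 by (simp add: log_def ln_realpow)
      also have "2 * ln K / ln 2 + 2 \<le> 4 / ln 2 * ln K"
      proof -
        have "2 \<le> 2 * ln K / ln 2" using lnK ln2 by (simp add: le_divide_eq)
        then show ?thesis by (simp add: field_simps)
      qed
      finally show ?thesis using True r K0 by (simp add: C1_def rho_def)
    next
      case False
      then have a0: "a > 0" using a by simp
      define q where "q = 2 powr a"
      have q1: "q > 1" unfolding q_def using a0 by simp
      define s where "s = r / K"
      have s: "s > 0" unfolding s_def using r K0 by simp
      have "(\<Sum>j\<in>{1..n+1}. (2^j * s) powr a) = (\<Sum>j\<in>{1..n+1}. q^j * s powr a)"
        using s by (intro sum.cong) (auto simp: q_def powr_mult powr_realpow[symmetric] powr_powr mult.commute)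
      also have "\<dots> \<le> (\<Sum>j<n+2. q^j * s powr a)"
        by (intro sum_mono2) (use q1 s in auto)
      also have "\<dots> = (\<Sum>j<n+2. q^j) * s powr a" by (rule sum_distrib_right[symmetric])
      also have "(\<Sum>j<n+2. q^j) = (q^(n+2) - 1) / (q - 1)" using q1 by (intro geometric_sum) simp
      also have "\<dots> \<le> q^(n+2) / (q - 1)" using q1 by (simp add: divide_right_mono)
      finally have S: "(\<Sum>j\<in>{1..n+1}. (2^j * s) powr a) \<le> q^(n+2) / (q - 1) * s powr a"
        using s q1 by (simp add: mult_right_mono)
      have "q^(n+2) = 4 powr a * ((2::real)^n) powr a"
        unfolding q_def by (simp add: powr_realpow[symmetric] powr_powr powr_add powr_mult[symmetric] algebra_simps)
      also have "((2::real)^n) powr a \<le> (2 * K^2) powr a" using n2 a0 by (intro powr_mono2) auto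
      then have "4 powr a * ((2::real)^n) powr a \<le> 4 powr a * (2 * K^2) powr a" by simp
      finally have "q^(n+2) / (q - 1) * s powr a \<le> 4 powr a * (2 * K^2) powr a / (q - 1) * s powr a"
        using q1 s by (intro mult_right_mono divide_right_mono) auto
      also have "4 powr a * (2 * K^2) powr a / (q - 1) * s powr a = 8 powr a / (q - 1) * K powr a * r powr a"
      proof -
        have "(2 * K^2) powr a = 2 powr a * K powr a * K powr a" using K0
          by (simp add: powr_mult power2_eq_square)
        moreover have "s powr a = r powr a / K powr a" unfolding s_def using r K0 by (simp add: powr_divide)
        moreover have "(8::real) powr a = 4 powr a * 2 powr a" by (simp add: powr_mult[symmetric])
        ultimately show ?thesis using K0 q1 by (simp add: field_simps)
      qed
      finally have "(\<Sum>j\<in>{1..n+1}. (2^j * s) powr a) \<le> 8 powr a / (q - 1) * K powr a * r powr a"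
        using S by linarith
      then show ?thesis using a0 unfolding s_def q_def C1_def rho_def by simp
    qed
  qed
qed


lemma shift_const:
  fixes h :: "'a::euclidean_space \<Rightarrow> real"
  assumes p: "p \<ge> 1" and hm: "h \<in> borel_measurable lebesgue"
    and B: "B \<in> sets lebesgue" "emeasure lebesgue B < \<infinity>"
  shows "(\<integral>\<^sup>+ y\<in>B. ennreal (\<bar>h y - c\<bar> powr p) \<partial>lebesgue)
     \<le> ennreal (2 powr p) * (\<integral>\<^sup>+ y\<in>B. ennreal (\<bar>h y - c'\<bar> powr p) \<partial>lebesgue)
        + ennreal (2 powr p * \<bar>c' - c\<bar> powr p * measure lebesgue B)"
proof -
  have [measurable]: "h \<in> borel_measurable lebesgue" by (rule hm)
  have [measurable]: "B \<in> sets lebesgue" by (rule B)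
  have "(\<integral>\<^sup>+ y\<in>B. ennreal (\<bar>h y - c\<bar> powr p) \<partial>lebesgue)
        \<le> (\<integral>\<^sup>+ y. (ennreal (2 powr p) * (ennreal (\<bar>h y - c'\<bar> powr p) * indicator B y)
               + ennreal (2 powr p * \<bar>c' - c\<bar> powr p) * indicator B y) \<partial>lebesgue)"
  proof (rule nn_integral_mono)
    fix y
    have "\<bar>h y - c\<bar> powr p \<le> (\<bar>h y - c'\<bar> + \<bar>c' - c\<bar>) powr p"
      by (rule powr_mono2) (use p in auto)
    also have "\<dots> \<le> 2 powr p * (\<bar>h y - c'\<bar> powr p + \<bar>c' - c\<bar> powr p)"
      by (rule sum_powr_le) (use p in auto)
    finally have "ennreal (\<bar>h y - c\<bar> powr p) \<le> ennreal (2 powr p) * ennreal (\<bar>h y - c'\<bar> powr p) + ennreal (2 powr p * \<bar>c' - c\<bar> powr p)"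
      by (simp add: ennreal_mult'[symmetric] ennreal_plus[symmetric] distrib_left del: ennreal_plus)
    then show "ennreal (\<bar>h y - c\<bar> powr p) * indicator B y \<le> ennreal (2 powr p) * (ennreal (\<bar>h y - c'\<bar> powr p) * indicator B y)
               + ennreal (2 powr p * \<bar>c' - c\<bar> powr p) * indicator B y"
      by (auto split: split_indicator)
  qed
  also have "\<dots> = (\<integral>\<^sup>+ y. ennreal (2 powr p) * (ennreal (\<bar>h y - c'\<bar> powr p) * indicator B y) \<partial>lebesgue)
         + (\<integral>\<^sup>+ y. ennreal (2 powr p * \<bar>c' - c\<bar> powr p) * indicator B y \<partial>lebesgue)"
    by (rule nn_integral_add) measurable
  also have "(\<integral>\<^sup>+ y. ennreal (2 powr p) * (ennreal (\<bar>h y - c'\<bar> powr p) * indicator B y) \<partial>lebesgue)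
        = ennreal (2 powr p) * (\<integral>\<^sup>+ y\<in>B. ennreal (\<bar>h y - c'\<bar> powr p) \<partial>lebesgue)"
    by (rule nn_integral_cmult) measurable
  also have "(\<integral>\<^sup>+ y. ennreal (2 powr p * \<bar>c' - c\<bar> powr p) * indicator B y \<partial>lebesgue)
        = ennreal (2 powr p * \<bar>c' - c\<bar> powr p) * emeasure lebesgue B"
    by (rule nn_integral_cmult_indicator) simp
  also have "emeasure lebesgue B = ennreal (measure lebesgue B)" using B by (simp add: emeasure_eq_ennreal_measure)
  also have "ennreal (2 powr p * \<bar>c' - c\<bar> powr p) * ennreal (measure lebesgue B) = ennreal (2 powr p * \<bar>c' - c\<bar> powr p * measure lebesgue B)"
    by (simp add: ennreal_mult'[symmetric])
  finally show ?thesis .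
qed


context bl_map begin

lemma main_f:
  fixes f :: "'a \<Rightarrow> real"
  assumes p: "p \<ge> 1" "0 \<le> a" and M: "M \<ge> 0"
   and fi: "\<And>x r. set_integrable lebesgue (ball x r) f"
   and fm: "f \<in> borel_measurable lebesgue"
   and bd: "\<And>x r. r > 0 \<Longrightarrow> (\<integral>\<^sup>+ y\<in>ball x r. ennreal (\<bar>f y - ball_avg f x r\<bar> powr p) \<partial>lebesgue)
              \<le> ennreal (M powr p * measure lebesgue (ball x r) powr (1 + a*p/DIM('a)))"
   and r: "r > 0"
  shows "\<exists>c. (\<integral>\<^sup>+ y\<in>\<phi> ` ball x0 r. ennreal (\<bar>f y - c\<bar> powr p) \<partial>lebesgue)
      \<le> ennreal (4^DIM('a) * 2 powr p * measure lebesgue (ball x0 r) *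
          (M powr p * measure lebesgue (ball x0 r) powr (a*p/DIM('a))
           + (Econst TYPE('a) p a M * C1 a * rho a K * r powr a) powr p))"
proof -
  obtain n where n1: "K^2 \<le> 2^n" and n2: "(\<Sum>j\<in>{1..n+1}. (2^j * (r/K)) powr a) \<le> C1 a * rho a K * r powr a"
    using chain_sum_bound[OF p(2) K2 r] by blast
  have K0: "K > 0" using K2 by simp
  define s where "s = r / K"
  have s: "s > 0" unfolding s_def using r K0 by simp
  have sr: "s \<le> r" unfolding s_def using r K2 by (simp add: divide_le_eq)
  define c where "c = ball_avg f (\<phi> x0) (2^(n+1) * s)"
  define E where "E = Econst TYPE('a) p a M"
  have E: "E \<ge> 0" unfolding E_def Econst_def using M by simp
  define D where "D = E * C1 a * rho a K * r powr a"
  define \<omega> where "\<omega> = unit_ball_vol (real DIM('a))"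
  have \<omega>: "\<omega> > 0" unfolding \<omega>_def by simp
  define d where "d = real DIM('a)"
  define V where "V = measure lebesgue (ball x0 r)"
  define Vs where "Vs = \<omega> * s ^ DIM('a)"
  have V: "V = \<omega> * r ^ DIM('a)" unfolding V_def \<omega>_def by (rule measure_ball_leb) (use r in simp)
  have Vsw: "\<And>w::'a. measure lebesgue (ball w s) = Vs" unfolding Vs_def \<omega>_def by (rule measure_ball_leb) (use s in simp)
  have Vs0: "Vs > 0" unfolding Vs_def using \<omega> s by simp
  have VsV: "Vs \<le> V" unfolding Vs_def V using \<omega> s sr by (simp add: power_mono)
  have D: "D \<ge> 0"
  proof -
    have "0 \<le> (\<Sum>j\<in>{1..n+1}. (2^j * (r/K)) powr a)" by (intro sum_nonneg) simp
    then have "0 \<le> C1 a * rho a K * r powr a" using n2 by linarith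
    then show ?thesis unfolding D_def using E by (simp add: mult.assoc)
  qed
  obtain W where W: "finite W" "W \<subseteq> \<phi> ` ball x0 r" "\<phi> ` ball x0 r \<subseteq> (\<Union>w\<in>W. ball w (r/K))"
    "real (card W) \<le> (4*K) ^ DIM('a)"
    using covering[OF r] by blast
  have cw: "\<bar>ball_avg f w s - c\<bar> \<le> D" if w: "w \<in> W" for w
  proof -
    obtain x where x: "w = \<phi> x" "dist x0 x < r" using w W(2) by auto
    have "dist w (\<phi> x0) \<le> K * dist x x0" unfolding x by (rule lipK)
    also have "\<dots> \<le> K * r" using x K0 by (simp add: dist_commute)
    also have "K * r = K^2 * s" unfolding s_def using K0 by (simp add: power2_eq_square)
    also have "\<dots> \<le> 2^n * s" using n1 s by (simp add: mult_right_mono)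
    finally have wz: "dist w (\<phi> x0) \<le> 2^n * s" .
    have "\<bar>ball_avg f w s - c\<bar> \<le> (\<Sum>j\<in>{1..n+1}. E * (2^j * s) powr a)"
      unfolding c_def E_def by (rule chain[OF p M fi bd s wz])
    also have "\<dots> = E * (\<Sum>j\<in>{1..n+1}. (2^j * (r/K)) powr a)" unfolding s_def by (rule sum_distrib_left[symmetric])
    also have "\<dots> \<le> E * (C1 a * rho a K * r powr a)" using n2 E by (rule mult_left_mono)
    finally show ?thesis unfolding D_def by (simp add: mult.assoc)
  qed
  define T where "T = 2 powr p * Vs * (M powr p * V powr (a*p/d) + D powr p)"
  have T0: "0 \<le> T" unfolding T_def using Vs0 M D by simp
  have perw: "(\<integral>\<^sup>+ y\<in>ball w s. ennreal (\<bar>f y - c\<bar> powr p) \<partial>lebesgue) \<le> ennreal T" if w: "w \<in> W" for w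
  proof -
    have "(\<integral>\<^sup>+ y\<in>ball w s. ennreal (\<bar>f y - c\<bar> powr p) \<partial>lebesgue)
      \<le> ennreal (2 powr p) * (\<integral>\<^sup>+ y\<in>ball w s. ennreal (\<bar>f y - ball_avg f w s\<bar> powr p) \<partial>lebesgue)
        + ennreal (2 powr p * \<bar>ball_avg f w s - c\<bar> powr p * measure lebesgue (ball w s))"
      by (rule shift_const[OF p(1) fm]) (use emeasure_ball_leb[of s w] s in auto)
    also have "\<dots> \<le> ennreal (2 powr p) * ennreal (M powr p * Vs powr (1 + a*p/d))
        + ennreal (2 powr p * D powr p * Vs)"
    proof (intro add_mono mult_left_mono ennreal_leI)
      show "(\<integral>\<^sup>+ y\<in>ball w s. ennreal (\<bar>f y - ball_avg f w s\<bar> powr p) \<partial>lebesgue) \<le> ennreal (M powr p * Vs powr (1 + a*p/d))"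
        using bd[OF s, of w] unfolding Vsw d_def .
      have "\<bar>ball_avg f w s - c\<bar> powr p \<le> D powr p" using cw[OF w] p by (intro powr_mono2) auto
      then show "2 powr p * \<bar>ball_avg f w s - c\<bar> powr p * measure lebesgue (ball w s) \<le> 2 powr p * D powr p * Vs"
        unfolding Vsw using Vs0 by simp
    qed auto
    also have "\<dots> = ennreal (2 powr p * Vs * (M powr p * Vs powr (a*p/d) + D powr p))"
    proof -
      have "Vs powr (1 + a*p/d) = Vs * Vs powr (a*p/d)" using Vs0 by (simp add: powr_add)
      then show ?thesis using Vs0 M by (simp add: ennreal_mult'[symmetric] ennreal_plus[symmetric] algebra_simps del: ennreal_plus)
    qed
    also have "\<dots> \<le> ennreal T" unfolding T_def
    proof (intro ennreal_leI mult_left_mono add_right_mono)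
      show "Vs powr (a*p/d) \<le> V powr (a*p/d)" using VsV Vs0 p unfolding d_def by (intro powr_mono2) auto
    qed (use Vs0 M in auto)
    finally show ?thesis .
  qed
  have [measurable]: "f \<in> borel_measurable lebesgue" by (rule fm)
  have [measurable]: "\<And>w. ball w s \<in> sets lebesgue" by simp
  have "(\<integral>\<^sup>+ y\<in>\<phi> ` ball x0 r. ennreal (\<bar>f y - c\<bar> powr p) \<partial>lebesgue)
      \<le> (\<integral>\<^sup>+ y. (\<Sum>w\<in>W. ennreal (\<bar>f y - c\<bar> powr p) * indicator (ball w s) y) \<partial>lebesgue)"
  proof (rule nn_integral_mono)
    fix y
    show "ennreal (\<bar>f y - c\<bar> powr p) * indicator (\<phi> ` ball x0 r) y \<le> (\<Sum>w\<in>W. ennreal (\<bar>f y - c\<bar> powr p) * indicator (ball w s) y)"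
    proof (cases "y \<in> \<phi> ` ball x0 r")
      case True
      then obtain w where w: "w \<in> W" "y \<in> ball w s" using W(3) unfolding s_def by blast
      have "ennreal (\<bar>f y - c\<bar> powr p) * indicator (\<phi> ` ball x0 r) y = ennreal (\<bar>f y - c\<bar> powr p) * indicator (ball w s) y"
        using True w by simp
      also have "\<dots> \<le> (\<Sum>w\<in>W. ennreal (\<bar>f y - c\<bar> powr p) * indicator (ball w s) y)"
        by (rule member_le_sum) (use w W(1) in auto)
      finally show ?thesis .
    qed simp
  qed
  also have "\<dots> = (\<Sum>w\<in>W. (\<integral>\<^sup>+ y\<in>ball w s. ennreal (\<bar>f y - c\<bar> powr p) \<partial>lebesgue))"
    by (rule nn_integral_sum) measurable
  also have "\<dots> \<le> (\<Sum>w\<in>W. ennreal T)" by (rule sum_mono) (rule perw)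
  also have "\<dots> = ennreal (\<Sum>w\<in>W. T)" by (rule sum_ennreal) (use T0 in auto)
  also have "(\<Sum>w\<in>W. T) = real (card W) * T" by simp
  also have "ennreal (real (card W) * T) \<le> ennreal ((4*K) ^ DIM('a) * T)"
    by (rule ennreal_leI, rule mult_right_mono[OF W(4) T0])
  also have "(4*K) ^ DIM('a) * T = 4^DIM('a) * 2 powr p * V * (M powr p * V powr (a*p/d) + D powr p)"
  proof -
    have "(4*K) ^ DIM('a) * Vs = 4^DIM('a) * V"
      unfolding Vs_def V s_def using K0 by (simp add: power_mult_distrib power_divide field_simps)
    moreover have "T = Vs * (2 powr p * (M powr p * V powr (a*p/d) + D powr p))"
      unfolding T_def by (simp add: ac_simps)
    ultimately have "(4*K) ^ DIM('a) * T = (4^DIM('a) * V) * (2 powr p * (M powr p * V powr (a*p/d) + D powr p))"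
      by (metis mult.assoc)
    then show ?thesis by (simp add: ac_simps)
  qed
  finally show ?thesis unfolding V_def D_def E_def d_def by blast
qed

end


context bl_map begin

lemma g_integrable:
  fixes f :: "'a \<Rightarrow> real"
  assumes fi: "\<And>x r. set_integrable lebesgue (ball x r) f"
   and fm: "f \<in> borel_measurable lebesgue"
  shows "set_integrable lebesgue (ball x0 r) (f \<circ> \<phi>)"
  unfolding set_integrable_def integrable_iff_bounded
proof
  have [measurable]: "f \<in> borel_measurable lebesgue" by (rule fm)
  have gm [measurable]: "(f \<circ> \<phi>) \<in> borel_measurable lebesgue"
    by (rule measurable_comp[OF meas_phi fm])
  show "(\<lambda>x. indicator (ball x0 r) x *\<^sub>R (f \<circ> \<phi>) x) \<in> borel_measurable lebesgue"
    by (intro borel_measurable_scaleR borel_measurable_indicator gm) simp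
  have "(\<integral>\<^sup>+ x. ennreal (norm (indicator (ball x0 r) x *\<^sub>R (f \<circ> \<phi>) x)) \<partial>lebesgue)
      = (\<integral>\<^sup>+ x\<in>ball x0 r. ennreal (norm (f (\<phi> x))) \<partial>lebesgue)"
    by (intro nn_integral_cong) (auto split: split_indicator)
  also have "\<dots> = (\<integral>\<^sup>+ y\<in>\<phi> ` ball x0 r. ennreal (norm (f y)) \<partial>lebesgue)"
    by (rule nn_change[where g = "\<lambda>y. ennreal (norm (f y))"]) auto
  also have "\<dots> \<le> (\<integral>\<^sup>+ y. ennreal (norm (indicator (ball (\<phi> x0) (K * r)) y *\<^sub>R f y)) \<partial>lebesgue)"
    using image_ball_sub[of x0 r] by (intro nn_integral_mono) (auto split: split_indicator)
  also have "\<dots> < \<infinity>" using fi[of "\<phi> x0" "K * r"] unfolding set_integrable_def integrable_iff_bounded by blast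
  finally show "(\<integral>\<^sup>+ x. ennreal (norm (indicator (ball x0 r) x *\<^sub>R (f \<circ> \<phi>) x)) \<partial>lebesgue) < \<infinity>" .
qed

lemma rho_ge: "0 \<le> a \<Longrightarrow> rho a K \<ge> 1/2"
proof (cases "a > 0")
  case True
  have "1 \<le> K powr a" using K2 True by (simp add: ge_one_powr_ge_zero)
  then show ?thesis using True by (simp add: rho_def)
next
  case False
  have "ln (1/2::real) \<le> 1/2 - 1" by (rule ln_le_minus_one) simp
  then have "ln (2::real) \<ge> 1/2" by (simp add: ln_div)
  moreover have "ln 2 \<le> ln K" using K2 by simp
  ultimately show ?thesis using False by (simp add: rho_def)
qed

end


definition Cp :: "'a::euclidean_space itself \<Rightarrow> real \<Rightarrow> real \<Rightarrow> real" where
  "Cp _ p a = 2 powr p * 2 * 4^DIM('a) * 2 powr p * (2 powr p + 2 powr (real DIM('a)) * C1 a powr p)"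

lemma Cp_pos: "a \<ge> 0 \<Longrightarrow> Cp TYPE('a::euclidean_space) p a > 0"
  unfolding Cp_def using C1_pos[of a] by (intro mult_pos_pos add_pos_nonneg) auto

context bl_map begin

lemma g_bound:
  fixes f :: "'a \<Rightarrow> real"
  assumes p: "p \<ge> 1" "0 \<le> a" and M: "M \<ge> 0"
   and fi: "\<And>x r. set_integrable lebesgue (ball x r) f"
   and fm: "f \<in> borel_measurable lebesgue"
   and bd: "\<And>x r. r > 0 \<Longrightarrow> (\<integral>\<^sup>+ y\<in>ball x r. ennreal (\<bar>f y - ball_avg f x r\<bar> powr p) \<partial>lebesgue)
              \<le> ennreal (M powr p * measure lebesgue (ball x r) powr (1 + a*p/DIM('a)))"
   and r: "r > 0"
  shows "(\<integral>\<^sup>+ y\<in>ball x0 r. ennreal (\<bar>(f \<circ> \<phi>) y - ball_avg (f \<circ> \<phi>) x0 r\<bar> powr p) \<partial>lebesgue)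
        \<le> ennreal (Cp TYPE('a) p a * rho a K powr p * M powr p * measure lebesgue (ball x0 r) powr (1 + a*p/DIM('a)))"
proof -
  define d where "d = real DIM('a)"
  define V where "V = measure lebesgue (ball x0 r)"
  define \<omega> where "\<omega> = unit_ball_vol (real DIM('a))"
  have \<omega>: "\<omega> > 0" unfolding \<omega>_def by simp
  have V: "V = \<omega> * r ^ DIM('a)" unfolding V_def \<omega>_def by (rule measure_ball_leb) (use r in simp)
  have V0: "V > 0" using V \<omega> r by simp
  define R where "R = rho a K powr p"
  have \<rho>: "rho a K \<ge> 1/2" by (rule rho_ge) (use p in simp)
  define X where "X = M powr p * V powr (a*p/d)"
  have X0: "X \<ge> 0" unfolding X_def by simp
  define D where "D = Econst TYPE('a) p a M * C1 a * rho a K * r powr a"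
  obtain c where c: "(\<integral>\<^sup>+ y\<in>\<phi> ` ball x0 r. ennreal (\<bar>f y - c\<bar> powr p) \<partial>lebesgue)
      \<le> ennreal (4^DIM('a) * 2 powr p * V * (X + D powr p))"
    using main_f[OF p M fi fm bd r, of x0] unfolding V_def X_def D_def d_def by blast
  have gm: "(f \<circ> \<phi>) \<in> borel_measurable lebesgue" by (rule measurable_comp[OF meas_phi fm])
  have "(\<integral>\<^sup>+ y\<in>ball x0 r. ennreal (\<bar>(f \<circ> \<phi>) y - ball_avg (f \<circ> \<phi>) x0 r\<bar> powr p) \<partial>lebesgue)
      \<le> ennreal (2 powr p * 2) * (\<integral>\<^sup>+ y\<in>ball x0 r. ennreal (\<bar>(f \<circ> \<phi>) y - c\<bar> powr p) \<partial>lebesgue)"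
    by (rule osc_S1[OF p(1) gm g_integrable[OF fi fm] r])
  also have "(\<integral>\<^sup>+ y\<in>ball x0 r. ennreal (\<bar>(f \<circ> \<phi>) y - c\<bar> powr p) \<partial>lebesgue)
      = (\<integral>\<^sup>+ y\<in>\<phi> ` ball x0 r. ennreal (\<bar>f y - c\<bar> powr p) \<partial>lebesgue)"
    using nn_change[where g = "\<lambda>y. ennreal (\<bar>f y - c\<bar> powr p)" and B = "ball x0 r"] fm by simp
  also have "ennreal (2 powr p * 2) * \<dots> \<le> ennreal (2 powr p * 2) * ennreal (4^DIM('a) * 2 powr p * V * (X + D powr p))"
    by (rule mult_left_mono[OF c]) simp
  also have "\<dots> = ennreal (2 powr p * 2 * (4^DIM('a) * 2 powr p * V * (X + D powr p)))"
    by (simp add: ennreal_mult'[symmetric])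
  also have "\<dots> \<le> ennreal (Cp TYPE('a) p a * R * M powr p * V powr (1 + a*p/d))"
  proof (rule ennreal_leI)
    have Dp: "D powr p = 2 powr d * C1 a powr p * R * X"
    proof -
      have "D = 2 powr (d/p) * M * \<omega> powr (a/d) * C1 a * rho a K * r powr a"
        unfolding D_def Econst_def d_def \<omega>_def by simp
      then have "D powr p = (2 powr (d/p)) powr p * M powr p * (\<omega> powr (a/d)) powr p * C1 a powr p * rho a K powr p * (r powr a) powr p"
        using M C1_pos[OF p(2)] \<rho> \<omega> r by (simp add: powr_mult)
      also have "\<dots> = 2 powr d * M powr p * \<omega> powr (a*p/d) * C1 a powr p * R * r powr (a*p)"
        using p unfolding R_def by (simp add: powr_powr)
      also have "V powr (a*p/d) = \<omega> powr (a*p/d) * r powr (a*p)"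
        unfolding V_def \<omega>_def d_def by (rule measure_ball_powr) (use r in simp)
      then have "2 powr d * M powr p * \<omega> powr (a*p/d) * C1 a powr p * R * r powr (a*p) = 2 powr d * C1 a powr p * R * X"
        unfolding X_def by (simp add: ac_simps)
      finally show ?thesis .
    qed
    have R1: "1 \<le> 2 powr p * R"
    proof -
      have "1 \<le> (2 * rho a K) powr p" using \<rho> p by (simp add: ge_one_powr_ge_zero)
      then show ?thesis unfolding R_def using \<rho> by (simp add: powr_mult)
    qed
    have R0: "R \<ge> 0" unfolding R_def by simp
    have "X + D powr p = X * (1 + 2 powr d * C1 a powr p * R)" unfolding Dp by (simp add: algebra_simps)
    also have "\<dots> \<le> X * (2 powr p * R + 2 powr d * C1 a powr p * R)"
      using X0 R1 by (intro mult_left_mono) auto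
    also have "\<dots> = X * R * (2 powr p + 2 powr d * C1 a powr p)" by (simp add: algebra_simps)
    finally have XD: "X + D powr p \<le> X * R * (2 powr p + 2 powr d * C1 a powr p)" .
    have "2 powr p * 2 * (4^DIM('a) * 2 powr p * V * (X + D powr p))
        \<le> 2 powr p * 2 * (4^DIM('a) * 2 powr p * V * (X * R * (2 powr p + 2 powr d * C1 a powr p)))"
      using XD V0 by (intro mult_left_mono) auto
    also have "\<dots> = Cp TYPE('a) p a * R * M powr p * V powr (1 + a*p/d)"
    proof -
      have "V powr (1 + a*p/d) = V * V powr (a*p/d)" using V0 by (simp add: powr_add)
      then show ?thesis unfolding Cp_def X_def d_def by (simp add: ac_simps)
    qed
    finally show "2 powr p * 2 * (4^DIM('a) * 2 powr p * V * (X + D powr p)) \<le> Cp TYPE('a) p a * R * M powr p * V powr (1 + a*p/d)" .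
  qed
  finally show ?thesis unfolding R_def V_def d_def .
qed

end


lemma K_const_props:
  fixes \<phi> \<psi> :: "'a::euclidean_space \<Rightarrow> 'a"
  assumes hom: "homeomorphism UNIV UNIV \<phi> \<psi>" and bl: "bi_lipschitz \<phi>"
  shows "K_const \<phi> \<ge> 2" "\<And>x y. dist (\<phi> x) (\<phi> y) \<le> K_const \<phi> * dist x y"
    "\<And>x y. dist x y \<le> K_const \<phi> * dist (\<phi> x) (\<phi> y)"
proof -
  define S where "S = {dist (\<phi> x) (\<phi> y) / dist x y + dist x y / dist (\<phi> x) (\<phi> y) | x y. x \<noteq> y}"
  have KS: "K_const \<phi> = Sup S" unfolding K_const_def S_def ..
  obtain L where L: "\<And>x y. dist (\<phi> x) (\<phi> y) \<le> L * dist x y" "\<And>x y. dist x y \<le> L * dist (\<phi> x) (\<phi> y)"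
    using bl unfolding bi_lipschitz_def by blast
  have inj: "\<phi> x \<noteq> \<phi> y" if "x \<noteq> y" for x y
  proof
    assume "\<phi> x = \<phi> y"
    then have "\<psi> (\<phi> x) = \<psi> (\<phi> y)" by simp
    then show False using that homeomorphism_apply1[OF hom] by simp
  qed
  have bdd: "bdd_above S"
  proof (rule bdd_aboveI)
    fix t assume "t \<in> S"
    then obtain x y where xy: "x \<noteq> y" "t = dist (\<phi> x) (\<phi> y) / dist x y + dist x y / dist (\<phi> x) (\<phi> y)"
      unfolding S_def by blast
    have d1: "dist x y > 0" using xy by simp
    have d2: "dist (\<phi> x) (\<phi> y) > 0" using inj[OF xy(1)] by simp
    have "dist (\<phi> x) (\<phi> y) / dist x y \<le> L" using L(1)[of x y] d1 by (simp add: divide_le_eq)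
    moreover have "dist x y / dist (\<phi> x) (\<phi> y) \<le> L" using L(2)[of x y] d2 by (simp add: divide_le_eq)
    ultimately show "t \<le> 2 * L" using xy by simp
  qed
  have mem: "dist (\<phi> x) (\<phi> y) / dist x y + dist x y / dist (\<phi> x) (\<phi> y) \<le> K_const \<phi>" if "x \<noteq> y" for x y
    unfolding KS by (rule cSup_upper[OF _ bdd]) (use that in \<open>auto simp: S_def\<close>)
  show "dist (\<phi> x) (\<phi> y) \<le> K_const \<phi> * dist x y" for x y
  proof (cases "x = y")
    case False
    have d1: "dist x y > 0" using False by simp
    have "0 \<le> dist x y / dist (\<phi> x) (\<phi> y)" by simp
    then have "dist (\<phi> x) (\<phi> y) / dist x y \<le> K_const \<phi>" using mem[OF False] by linarith
    then show ?thesis using d1 by (simp add: divide_le_eq)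
  qed simp
  show "dist x y \<le> K_const \<phi> * dist (\<phi> x) (\<phi> y)" for x y
  proof (cases "x = y")
    case False
    have d2: "dist (\<phi> x) (\<phi> y) > 0" using inj[OF False] by simp
    have "0 \<le> dist (\<phi> x) (\<phi> y) / dist x y" by simp
    then have "dist x y / dist (\<phi> x) (\<phi> y) \<le> K_const \<phi>" using mem[OF False] by linarith
    then show ?thesis using d2 by (simp add: divide_le_eq)
  qed simp
  obtain b :: 'a where b: "b \<in> Basis" using nonempty_Basis by blast
  then have b0: "b \<noteq> 0" by auto
  define t where "t = dist (\<phi> b) (\<phi> 0) / dist b 0"
  have t: "t > 0" unfolding t_def using b0 inj[OF b0] by simp
  have "2 \<le> t + 1 / t"
  proof -
    have "0 \<le> (t - 1)^2" by simp
    then have "2 * t \<le> t * t + 1" by (simp add: power2_eq_square algebra_simps)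
    then show ?thesis using t by (simp add: field_simps)
  qed
  also have "t + 1 / t = dist (\<phi> b) (\<phi> 0) / dist b 0 + dist b 0 / dist (\<phi> b) (\<phi> 0)"
    unfolding t_def by simp
  also have "\<dots> \<le> K_const \<phi>" by (rule mem[OF b0])
  finally show "K_const \<phi> \<ge> 2" .
qed

theorem theorem2p1:
  fixes p a :: real
  assumes "1 \<le> p" and "0 \<le> a" and "a < 1"
  shows "\<exists>C>0. \<forall>\<phi> :: 'a::euclidean_space \<Rightarrow> 'a.
           (\<exists>\<psi>. homeomorphism UNIV UNIV \<phi> \<psi>) \<and> bi_lipschitz \<phi> \<and> preserves_lebesgue \<phi> \<longrightarrow>
           (\<forall>f :: 'a \<Rightarrow> real. locally_integrable f \<longrightarrow>
              sharp_norm p a (f \<circ> \<phi>) \<le> ennreal (C * rho a (K_const \<phi>)) * sharp_norm p a f)"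
proof -
  define C where "C = Cp TYPE('a) p a powr (1/p)"
  have Cp0: "Cp TYPE('a) p a > 0" by (rule Cp_pos) (use assms in simp)
  have C0: "C > 0" unfolding C_def using Cp0 by simp
  have Cpow: "C powr p = Cp TYPE('a) p a" unfolding C_def using Cp0 assms by (simp add: powr_powr)
  show ?thesis
  proof (intro exI[of _ C] conjI allI impI C0)
    fix \<phi> :: "'a \<Rightarrow> 'a" and f :: "'a \<Rightarrow> real"
    assume H: "(\<exists>\<psi>. homeomorphism UNIV UNIV \<phi> \<psi>) \<and> bi_lipschitz \<phi> \<and> preserves_lebesgue \<phi>"
      and fli: "locally_integrable f"
    then obtain \<psi> where hom: "homeomorphism UNIV UNIV \<phi> \<psi>" by blast
    define K where "K = K_const \<phi>"
    note Kp = K_const_props[OF hom conjunct1[OF conjunct2[OF H]], folded K_def]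
    interpret bl_map \<phi> \<psi> K
      by unfold_locales (use hom Kp H in auto)
    have \<rho>: "rho a K \<ge> 1/2" by (rule rho_ge) (use assms in simp)
    have CK0: "C * rho a K > 0" using C0 \<rho> by simp
    have eqK: "K_const \<phi> = K" unfolding K_def ..
    show "sharp_norm p a (f \<circ> \<phi>) \<le> ennreal (C * rho a (K_const \<phi>)) * sharp_norm p a f"
    proof (cases "sharp_norm p a f")
      case top
      have "ennreal (C * rho a K) \<noteq> 0" using CK0 ennreal_eq_0_iff[of "C * rho a K"] by linarith
      then show ?thesis using top by (simp add: ennreal_mult_top eqK)
    next
      case (real M)
      have M: "M \<ge> 0" using real by simp
      have Q: "measure lebesgue (ball x r) powr (1 + a * p / real DIM('a)) > 0" if "r > 0" for x :: 'a and r
      proof -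
        have "unit_ball_vol (real DIM('a)) \<noteq> 0" using unit_ball_vol_pos[of "real DIM('a)"] by linarith
        then show ?thesis using measure_ball_leb[of r x] that by simp
      qed
      have bd: "(\<integral>\<^sup>+ y\<in>ball x r. ennreal (\<bar>f y - ball_avg f x r\<bar> powr p) \<partial>lebesgue)
              \<le> ennreal (M powr p * measure lebesgue (ball x r) powr (1 + a*p/DIM('a)))" if r: "r > 0" for x r
      proof -
        have "ball_osc p a f x r \<le> sharp_norm p a f"
          unfolding sharp_norm_def
          using SUP_upper[of "(x,r)" "{(x,y). 0<y}" "\<lambda>xr. ball_osc p a f (fst xr) (snd xr)"] r by simp
        then have "ball_osc p a f x r \<le> ennreal M" using real by simp
        then show ?thesis unfolding ball_osc_def using enn_root_le_iff[OF Q[OF r] M assms(1)] by simp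
      qed
      have fi: "\<And>x r. set_integrable lebesgue (ball x r) f" by (rule li_ball_integrable[OF fli])
      have fm: "f \<in> borel_measurable lebesgue" by (rule li_measurable[OF fli])
      have "sharp_norm p a (f \<circ> \<phi>) \<le> ennreal (C * rho a K * M)"
        unfolding sharp_norm_def
      proof (rule SUP_least)
        fix xr :: "'a \<times> real" assume "xr \<in> {(x, r). r > 0}"
        then obtain x r where xr: "xr = (x, r)" "r > 0" by auto
        have CM: "C * rho a K * M \<ge> 0" using CK0 M by simp
        have "(\<integral>\<^sup>+ y\<in>ball x r. ennreal (\<bar>(f \<circ> \<phi>) y - ball_avg (f \<circ> \<phi>) x r\<bar> powr p) \<partial>lebesgue)
          \<le> ennreal (Cp TYPE('a) p a * rho a K powr p * M powr p * measure lebesgue (ball x r) powr (1 + a*p/DIM('a)))"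
          by (rule g_bound[OF assms(1,2) M fi fm bd xr(2)])
        also have "Cp TYPE('a) p a * rho a K powr p * M powr p = (C * rho a K * M) powr p"
          using C0 \<rho> M by (simp add: powr_mult Cpow)
        finally have "ball_osc p a (f \<circ> \<phi>) x r \<le> ennreal (C * rho a K * M)"
          unfolding ball_osc_def using enn_root_le_iff[OF Q[OF xr(2)] CM assms(1)] by (simp add: mult.assoc comp_def)
        then show "ball_osc p a (f \<circ> \<phi>) (fst xr) (snd xr) \<le> ennreal (C * rho a K * M)" using xr by simp
      qed
      also have "\<dots> = ennreal (C * rho a K) * sharp_norm p a f"
        using real CK0 M by (simp add: ennreal_mult)
      finally show ?thesis unfolding eqK .
    qed
  qed
qed


end
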